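(* Let $\mathcal{C}$ be a simplicial complex on $[n]$. Then $\mathcal{C}$ is unimodular if and only if its Lawrence lifting $\Lambda(\mathcal{C})$ is unimodular.
   Context: A simplicial complex on $[n]$ is a family of subsets of $[n]$ closed under subsets; facets are inclusion-maximal faces. $\Lambda(\mathcal{C})$ is the simplicial complex on $[n+1]$ with facets $[n]$ and $F\cup\{n+1\}$ for each facet $F$ of $\mathcal{C}$. $\mathcal{A}_{\mathcal{C}}$ is the $0/1$ matrix with columns indexed by $\mathbf{i}\in\{1,2\}^n$ and rows indexed by pairs $(F,\mathbf{e})$, $F$ a facet, $\mathbf{e}\in\{1,2\}^F$; entry $1$ iff $\mathbf{e}=\mathbf{i}|_F$. An integer matrix is unimodular if every circuit (nonzero integer kernel vector with coprime entries and inclusion-minimal support) has entries in $\{0,\pm1\}$; a complex is unimodular if its matrix $\mathcal{A}$ is. *)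

theory Defs
  imports "HOL-Library.FuncSet"
begin

definition simplicial_complex :: "nat \<Rightarrow> nat set set \<Rightarrow> bool" where
  "simplicial_complex n C \<longleftrightarrow>
     C \<subseteq> Pow {1..n} \<and> (\<forall>F\<in>C. \<forall>G. G \<subseteq> F \<longrightarrow> G \<in> C)"

definition facets :: "nat set set \<Rightarrow> nat set set" where
  "facets C = {F \<in> C. \<forall>G\<in>C. F \<subseteq> G \<longrightarrow> G = F}"

definition lawrence :: "nat \<Rightarrow> nat set set \<Rightarrow> nat set set" where
  "lawrence n C = {G. G \<subseteq> {1..n}} \<union> {G. \<exists>F\<in>facets C. G \<subseteq> insert (n+1) F}"

definition in_kernel :: "'r set \<Rightarrow> 'c set \<Rightarrow> ('r \<Rightarrow> 'c \<Rightarrow> int) \<Rightarrow> ('c \<Rightarrow> int) \<Rightarrow> bool" where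
  "in_kernel R I M u \<longleftrightarrow> (\<forall>i. i \<notin> I \<longrightarrow> u i = 0) \<and> (\<forall>r\<in>R. (\<Sum>i\<in>I. M r i * u i) = 0)"

definition supp :: "('c \<Rightarrow> int) \<Rightarrow> 'c set" where
  "supp u = {i. u i \<noteq> 0}"

definition is_circuit :: "'r set \<Rightarrow> 'c set \<Rightarrow> ('r \<Rightarrow> 'c \<Rightarrow> int) \<Rightarrow> ('c \<Rightarrow> int) \<Rightarrow> bool" where
  "is_circuit R I M u \<longleftrightarrow>
     in_kernel R I M u \<and> supp u \<noteq> {} \<and> Gcd (u ` I) = 1 \<and>
     (\<forall>v. in_kernel R I M v \<and> supp v \<noteq> {} \<and> supp v \<subseteq> supp u \<longrightarrow> supp v = supp u)"

definition unimodular_matrix :: "'r set \<Rightarrow> 'c set \<Rightarrow> ('r \<Rightarrow> 'c \<Rightarrow> int) \<Rightarrow> bool" where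
  "unimodular_matrix R I M \<longleftrightarrow> (\<forall>u. is_circuit R I M u \<longrightarrow> (\<forall>i. u i \<in> {-1, 0, 1}))"

definition A_cols :: "nat \<Rightarrow> (nat \<Rightarrow> nat) set" where
  "A_cols n = PiE {1..n} (\<lambda>_. {1, 2})"

definition A_rows :: "nat set set \<Rightarrow> (nat set \<times> (nat \<Rightarrow> nat)) set" where
  "A_rows C = {(F, e). F \<in> facets C \<and> e \<in> PiE F (\<lambda>_. {1, 2})}"

definition A_entry :: "nat set \<times> (nat \<Rightarrow> nat) \<Rightarrow> (nat \<Rightarrow> nat) \<Rightarrow> int" where
  "A_entry r i = (if snd r = restrict i (fst r) then 1 else 0)"

definition unimodular_complex :: "nat \<Rightarrow> nat set set \<Rightarrow> bool" where
  "unimodular_complex n C \<longleftrightarrow> unimodular_matrix (A_rows C) (A_cols n) A_entry"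

end

theory Submission
  imports Defs
begin

definition Kset :: "nat set \<Rightarrow> nat set set \<Rightarrow> ((nat\<Rightarrow>nat) \<Rightarrow> int) \<Rightarrow> bool" where
"Kset D S u \<longleftrightarrow> (\<forall>i. i \<notin> PiE D (\<lambda>_. {1,2}) \<longrightarrow> u i = 0) \<and>
   (\<forall>F\<in>S. \<forall>e\<in>PiE F (\<lambda>_. {1::nat,2}). (\<Sum>i\<in>{i\<in>PiE D (\<lambda>_. {1,2}). restrict i F = e}. u i) = 0)"

lemma kernel_iff:
  "in_kernel (A_rows C) (A_cols n) A_entry u \<longleftrightarrow> Kset {1..n} (facets C) u"
proof -
  have fin: "finite (A_cols n)" unfolding A_cols_def by (simp add: finite_PiE)
  have eq: "(\<Sum>i\<in>A_cols n. A_entry (F,e) i * u i) = (\<Sum>i\<in>{i\<in>A_cols n. restrict i F = e}. u i)" for F e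
  proof -
    have "(\<Sum>i\<in>A_cols n. A_entry (F,e) i * u i) = (\<Sum>i\<in>A_cols n. if restrict i F = e then u i else 0)"
      by (rule sum.cong) (auto simp: A_entry_def)
    also have "\<dots> = (\<Sum>i\<in>{i\<in>A_cols n. restrict i F = e}. u i)"
      using sum.inter_filter[OF fin, of u "\<lambda>i. restrict i F = e"] by simp
    finally show ?thesis .
  qed
  show ?thesis unfolding in_kernel_def Kset_def A_rows_def
    using eq by (auto simp: A_cols_def)
qed

lemma marginal:
  assumes "finite D" "G \<subseteq> F" "F \<subseteq> D"
  shows "(\<Sum>i\<in>{i\<in>PiE D (\<lambda>_. {1::nat,2}). restrict i G = e}. u i) =
    (\<Sum>e'\<in>{e'\<in>PiE F (\<lambda>_. {1::nat,2}). restrict e' G = e}. \<Sum>i\<in>{i\<in>PiE D (\<lambda>_. {1::nat,2}). restrict i F = e'}. u i)"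
proof -
  let ?S = "{i\<in>PiE D (\<lambda>_. {1::nat,2}). restrict i G = e}"
  let ?T = "{e'\<in>PiE F (\<lambda>_. {1::nat,2}). restrict e' G = e}"
  have fS: "finite ?S" using assms(1) by (simp add: finite_PiE)
  have fF: "finite F" using assms(1,3) finite_subset by blast
  have fT: "finite ?T" using fF by (simp add: finite_PiE)
  have sub: "(\<lambda>i. restrict i F) ` ?S \<subseteq> ?T"
    using assms(2,3) by (auto simp: PiE_iff Int_absorb1 Int_absorb2 restrict_restrict) 
  have "(\<Sum>i\<in>?S. u i) = (\<Sum>y\<in>?T. \<Sum>x\<in>{x. x\<in>?S \<and> restrict x F = y}. u x)"
    using sum.group[OF fS fT sub, of u] by simp
  also have "\<dots> = (\<Sum>e'\<in>?T. \<Sum>i\<in>{i\<in>PiE D (\<lambda>_. {1::nat,2}). restrict i F = e'}. u i)"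
  proof (rule sum.cong[OF refl])
    fix y assume y: "y \<in> ?T"
    have "{x. x\<in>?S \<and> restrict x F = y} = {i\<in>PiE D (\<lambda>_. {1::nat,2}). restrict i F = y}"
      using y assms(2) by (auto simp: restrict_restrict Int_absorb1[OF assms(2)])
    then show "(\<Sum>x\<in>{x. x\<in>?S \<and> restrict x F = y}. u x) = (\<Sum>i\<in>{i\<in>PiE D (\<lambda>_. {1::nat,2}). restrict i F = y}. u i)"
      by simp
  qed
  finally show ?thesis .
qed

lemma Kset_mono:
  assumes "finite D" "\<forall>F\<in>S. F \<subseteq> D" "\<forall>G\<in>S'. \<exists>F\<in>S. G \<subseteq> F" "Kset D S u"
  shows "Kset D S' u"
  unfolding Kset_def
proof (intro conjI ballI)
  show "\<forall>i. i \<notin> PiE D (\<lambda>_. {1,2}) \<longrightarrow> u i = 0" using assms(4) by (simp add: Kset_def)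
next
  fix G e assume G: "G \<in> S'" and e: "e \<in> PiE G (\<lambda>_. {1::nat,2})"
  obtain F where F: "F \<in> S" "G \<subseteq> F" using assms(3) G by blast
  have "(\<Sum>i\<in>{i\<in>PiE D (\<lambda>_. {1::nat,2}). restrict i G = e}. u i) =
    (\<Sum>e'\<in>{e'\<in>PiE F (\<lambda>_. {1::nat,2}). restrict e' G = e}. \<Sum>i\<in>{i\<in>PiE D (\<lambda>_. {1::nat,2}). restrict i F = e'}. u i)"
    using marginal[OF assms(1) F(2)] assms(2) F(1) by blast
  also have "\<dots> = 0"
    using assms(4) F(1) unfolding Kset_def by (intro sum.neutral) auto
  finally show "(\<Sum>i\<in>{i\<in>PiE D (\<lambda>_. {1::nat,2}). restrict i G = e}. u i) = 0" .
qed

lemma below_facet: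
  assumes "finite S" "G \<in> S"
  shows "\<exists>F\<in>facets S. G \<subseteq> F"
  using finite_has_maximal2[OF assms] unfolding facets_def by blast


definition lift :: "nat \<Rightarrow> ((nat\<Rightarrow>nat) \<Rightarrow> int) \<Rightarrow> (nat\<Rightarrow>nat) \<Rightarrow> int" where
"lift n u = (\<lambda>i'. if i' \<in> A_cols (n+1) then (if i'(n+1) = 1 then u (restrict i' {1..n}) else - u (restrict i' {1..n})) else 0)"

definition proj :: "nat \<Rightarrow> ((nat\<Rightarrow>nat) \<Rightarrow> int) \<Rightarrow> (nat\<Rightarrow>nat) \<Rightarrow> int" where
"proj n v = (\<lambda>i. if i \<in> A_cols n then v (i(n+1:=1)) else 0)"

lemma c1: "i \<in> A_cols n \<Longrightarrow> j \<in> {1,2} \<Longrightarrow> i(n+1 := j) \<in> A_cols (n+1)"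
  unfolding A_cols_def by (auto simp: PiE_iff extensional_def)

lemma c2: "i' \<in> A_cols (n+1) \<Longrightarrow> restrict i' {1..n} \<in> A_cols n"
  unfolding A_cols_def by (auto simp: PiE_iff)

lemma c3: "i' \<in> A_cols (n+1) \<Longrightarrow> (restrict i' {1..n})(n+1 := i'(n+1)) = i'"
  unfolding A_cols_def by (rule ext) (auto simp: PiE_iff extensional_def)

lemma c4: "i \<in> A_cols n \<Longrightarrow> restrict (i(n+1:=j)) {1..n} = i"
  unfolding A_cols_def by (rule ext) (auto simp: PiE_iff extensional_def)

lemma c6: "i' \<in> A_cols (n+1) \<Longrightarrow> i'(n+1) \<in> {1,2}"
  unfolding A_cols_def by (auto simp: PiE_iff)

lemma sumS:
  assumes F: "F \<subseteq> {1..n}" and e: "e \<in> extensional F" and j: "j \<in> {1,2}"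
  shows "(\<Sum>i'\<in>{i'\<in>A_cols (n+1). restrict i' (insert (n+1) F) = e(n+1:=j)}. w i')
       = (\<Sum>i\<in>{i\<in>A_cols n. restrict i F = e}. w (i(n+1:=j)))"
proof -
  have inj: "inj_on (\<lambda>i. i(n+1:=j)) {i\<in>A_cols n. restrict i F = e}"
    by (rule inj_onI) (metis (no_types, lifting) c4 mem_Collect_eq)
  have nF: "n+1 \<notin> F" using F by auto
  have img: "(\<lambda>i. i(n+1:=j)) ` {i\<in>A_cols n. restrict i F = e} = {i'\<in>A_cols (n+1). restrict i' (insert (n+1) F) = e(n+1:=j)}"
  proof (intro equalityI subsetI)
    fix x assume "x \<in> (\<lambda>i. i(n+1:=j)) ` {i\<in>A_cols n. restrict i F = e}"
    then obtain i where i: "i \<in> A_cols n" "restrict i F = e" "x = i(n+1:=j)" by blast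
    have "x \<in> A_cols (n+1)" using c1[OF i(1) j] i(3) by simp
    moreover have "restrict x (insert (n+1) F) = e(n+1:=j)"
    proof (rule ext)
      fix y show "restrict x (insert (n+1) F) y = (e(n+1:=j)) y"
        using i(2,3) e nF by (cases "y = n+1") (auto simp: restrict_def extensional_def fun_eq_iff split: if_splits)
    qed
    ultimately show "x \<in> {i'\<in>A_cols (n+1). restrict i' (insert (n+1) F) = e(n+1:=j)}" by simp
  next
    fix x assume x: "x \<in> {i'\<in>A_cols (n+1). restrict i' (insert (n+1) F) = e(n+1:=j)}"
    then have xc: "x \<in> A_cols (n+1)" and xe: "restrict x (insert (n+1) F) = e(n+1:=j)" by auto
    have xj: "x (n+1) = j" using fun_cong[OF xe, of "n+1"] by simp
    have "restrict (restrict x {1..n}) F = e"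
    proof (rule ext)
      fix y show "restrict (restrict x {1..n}) F y = e y"
        using fun_cong[OF xe, of y] e nF F by (cases "y \<in> F") (auto simp: restrict_def extensional_def split: if_splits)
    qed
    moreover have "x = (restrict x {1..n})(n+1:=j)" using c3[OF xc] xj by metis
    ultimately show "x \<in> (\<lambda>i. i(n+1:=j)) ` {i\<in>A_cols n. restrict i F = e}"
      using c2[OF xc] by blast
  qed
  show ?thesis
    using sum.reindex[OF inj, of w] img by simp
qed

lemma sumN:
  assumes e: "e \<in> A_cols n"
  shows "(\<Sum>i'\<in>{i'\<in>A_cols (n+1). restrict i' {1..n} = e}. w i') = w (e(n+1:=1)) + w (e(n+1:=2))"
proof -
  have "{i'\<in>A_cols (n+1). restrict i' {1..n} = e} = {e(n+1:=1), e(n+1:=2)}"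
  proof (intro equalityI subsetI)
    fix x assume "x \<in> {i'\<in>A_cols (n+1). restrict i' {1..n} = e}"
    then have xc: "x \<in> A_cols (n+1)" and xe: "restrict x {1..n} = e" by auto
    have "x = e(n+1 := x(n+1))" using c3[OF xc] xe by metis
    then show "x \<in> {e(n+1:=1), e(n+1:=2)}" using c6[OF xc] by auto
  next
    fix x assume "x \<in> {e(n+1:=1), e(n+1:=2)}"
    then show "x \<in> {i'\<in>A_cols (n+1). restrict i' {1..n} = e}"
      using c1[OF e] c4[OF e] by auto
  qed
  moreover have "e(n+1:=1) \<noteq> e(n+1:=(2::nat))" by (metis fun_upd_same numeral_One numeral_eq_iff semiring_norm(85))
  ultimately show ?thesis by simp
qed

lemma lift_upd: "i \<in> A_cols n \<Longrightarrow> j \<in> {1,2} \<Longrightarrow> lift n u (i(n+1:=j)) = (if j = 1 then u i else - u i)"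
  unfolding lift_def using c1 c4 by auto

definition TT :: "nat \<Rightarrow> nat set set \<Rightarrow> nat set set" where
"TT n C = insert {1..n} ((insert (n+1)) ` facets C)"

lemma facets_sub: "simplicial_complex n C \<Longrightarrow> F \<in> facets C \<Longrightarrow> F \<subseteq> {1..n}"
  unfolding simplicial_complex_def facets_def by auto

lemma vanish_K: "Kset D S u \<Longrightarrow> i \<notin> PiE D (\<lambda>_. {1,2}) \<Longrightarrow> u i = 0"
  unfolding Kset_def by auto

lemma lift_K:
  assumes sc: "simplicial_complex n C" and van: "\<forall>i. i \<notin> A_cols n \<longrightarrow> u i = 0"
  shows "Kset {1..n+1} (TT n C) (lift n u) \<longleftrightarrow> Kset {1..n} (facets C) u"
proof
  assume K: "Kset {1..n+1} (TT n C) (lift n u)"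
  show "Kset {1..n} (facets C) u" unfolding Kset_def
  proof (intro conjI allI impI ballI)
    fix i assume "i \<notin> PiE {1..n} (\<lambda>_. {1::nat,2})" then show "u i = 0" using van by (simp add: A_cols_def)
  next
    fix F e assume F: "F \<in> facets C" and e: "e \<in> PiE F (\<lambda>_. {1::nat,2})"
    have Fs: "F \<subseteq> {1..n}" using facets_sub[OF sc F] .
    have "insert (n+1) F \<in> TT n C" using F unfolding TT_def by auto
    moreover have "e(n+1:=1) \<in> PiE (insert (n+1) F) (\<lambda>_. {1::nat,2})"
      using e by (auto simp: PiE_iff extensional_def)
    ultimately have "(\<Sum>i'\<in>{i'\<in>A_cols (n+1). restrict i' (insert (n+1) F) = e(n+1:=1)}. lift n u i') = 0"
      using K unfolding Kset_def A_cols_def by blast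
    also have "(\<Sum>i'\<in>{i'\<in>A_cols (n+1). restrict i' (insert (n+1) F) = e(n+1:=1)}. lift n u i')
       = (\<Sum>i\<in>{i\<in>A_cols n. restrict i F = e}. lift n u (i(n+1:=1)))"
      using sumS[OF Fs, of e 1] e by (simp add: PiE_iff)
    also have "\<dots> = (\<Sum>i\<in>{i\<in>A_cols n. restrict i F = e}. u i)"
      by (rule sum.cong[OF refl]) (use lift_upd[of _ n 1 u] in auto)
    finally show "(\<Sum>i\<in>{i\<in>PiE {1..n} (\<lambda>_. {1,2}). restrict i F = e}. u i) = 0" by (simp add: A_cols_def)
  qed
next
  assume K: "Kset {1..n} (facets C) u"
  show "Kset {1..n+1} (TT n C) (lift n u)" unfolding Kset_def
  proof (intro conjI allI impI ballI)
    fix i assume "i \<notin> PiE {1..n+1} (\<lambda>_. {1::nat,2})" then show "lift n u i = 0" by (simp add: A_cols_def lift_def)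
  next
    fix G e' assume G: "G \<in> TT n C" and e': "e' \<in> PiE G (\<lambda>_. {1::nat,2})"
    show "(\<Sum>i\<in>{i\<in>PiE {1..n+1} (\<lambda>_. {1,2}). restrict i G = e'}. lift n u i) = 0"
    proof (cases "G = {1..n}")
      case True
      then have ec: "e' \<in> A_cols n" using e' by (simp add: A_cols_def)
      show ?thesis using sumN[OF ec, of "lift n u"] True lift_upd[OF ec] by (simp add: A_cols_def)
    next
      case False
      then obtain F where F: "F \<in> facets C" "G = insert (n+1) F" using G unfolding TT_def by auto
      have Fs: "F \<subseteq> {1..n}" using facets_sub[OF sc F(1)] .
      let ?e = "restrict e' F" and ?j = "e' (n+1)"
      have j: "?j \<in> {1,2}" using e' F(2) by auto
      have eq: "e' = ?e(n+1 := ?j)" using e' F(2) by (auto simp: fun_eq_iff PiE_iff extensional_def)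
      have ee: "?e \<in> PiE F (\<lambda>_. {1::nat,2})" using e' F(2) by (auto simp: PiE_iff)
      have "(\<Sum>i\<in>{i\<in>A_cols (n+1). restrict i G = e'}. lift n u i)
         = (\<Sum>i\<in>{i\<in>A_cols n. restrict i F = ?e}. lift n u (i(n+1:=?j)))"
        using sumS[OF Fs, of ?e ?j "lift n u"] j F(2) eq by simp
      also have "\<dots> = (\<Sum>i\<in>{i\<in>A_cols n. restrict i F = ?e}. (if ?j = 1 then u i else - u i))"
        by (rule sum.cong[OF refl]) (use j lift_upd[of _ n ?j u] in auto)
      also have "\<dots> = 0"
      proof -
        have z: "(\<Sum>i\<in>{i\<in>A_cols n. restrict i F = ?e}. u i) = 0"
          using K F(1) ee unfolding Kset_def A_cols_def by blast
        show ?thesis using z by (cases "?j = 1") (simp_all add: sum_negf)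
      qed
      finally show ?thesis by (simp add: A_cols_def)
    qed
  qed
qed


lemma lift_proj:
  assumes K: "Kset {1..n+1} (TT n C) v"
  shows "v = lift n (proj n v)"
proof (rule ext)
  fix i'
  show "v i' = lift n (proj n v) i'"
  proof (cases "i' \<in> A_cols (n+1)")
    case False
    then show ?thesis using vanish_K[OF K, of i'] by (simp add: lift_def A_cols_def)
  next
    case True
    let ?i = "restrict i' {1..n}" and ?j = "i' (n+1)"
    have ic: "?i \<in> A_cols n" using c2[OF True] .
    have j: "?j \<in> {1,2}" using c6[OF True] .
    have ii: "?i(n+1 := ?j) = i'" using c3[OF True] .
    have "{1..n} \<in> TT n C" unfolding TT_def by simp
    then have "(\<Sum>i\<in>{i\<in>A_cols (n+1). restrict i {1..n} = ?i}. v i) = 0"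
      using K ic unfolding Kset_def A_cols_def by blast
    then have s: "v (?i(n+1:=1)) + v (?i(n+1:=2)) = 0" using sumN[OF ic, of v] by simp
    have "lift n (proj n v) i' = (if ?j = 1 then proj n v ?i else - proj n v ?i)"
      using True by (simp add: lift_def)
    also have "\<dots> = v i'"
    proof (cases "?j = 1")
      case True
      then show ?thesis using ic ii by (simp add: proj_def)
    next
      case False
      then have "?j = 2" using j by auto
      then show ?thesis using ic ii s False by (simp add: proj_def)
    qed
    finally show ?thesis by simp
  qed
qed

lemma proj_lift: "\<forall>i. i \<notin> A_cols n \<longrightarrow> u i = 0 \<Longrightarrow> proj n (lift n u) = u"
  by (rule ext) (auto simp: proj_def lift_upd[of _ n 1 u, simplified])

lemma proj_van: "\<forall>i. i \<notin> A_cols n \<longrightarrow> proj n v i = 0"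
  by (simp add: proj_def)

lemma lawrence_K:
  assumes sc: "simplicial_complex n C"
  shows "Kset {1..n+1} (facets (lawrence n C)) v \<longleftrightarrow> Kset {1..n+1} (TT n C) v"
proof -
  have fs: "\<forall>F\<in>facets C. F \<subseteq> {1..n}" using facets_sub[OF sc] by blast
  have sub: "{1..n} \<subseteq> {1..n+1}" "n+1 \<in> {1..n+1}" by auto
  have fs': "\<forall>F\<in>facets C. insert (n+1) F \<subseteq> {1..n+1}" using fs sub by blast
  have L: "lawrence n C \<subseteq> Pow {1..n+1}"
  proof
    fix G assume "G \<in> lawrence n C"
    then consider "G \<subseteq> {1..n}" | F where "F \<in> facets C" "G \<subseteq> insert (n+1) F" unfolding lawrence_def by blast
    then show "G \<in> Pow {1..n+1}"
    proof cases
      case 1 then show ?thesis by auto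
    next
      case 2 then show ?thesis using fs' by blast
    qed
  qed
  have finL: "finite (lawrence n C)" using L finite_subset by (metis finite_Pow_iff finite_atLeastAtMost)
  have T1: "\<forall>F\<in>TT n C. F \<subseteq> {1..n+1}" using fs' sub unfolding TT_def by blast
  have T2: "\<forall>F\<in>facets (lawrence n C). F \<subseteq> {1..n+1}" using L unfolding facets_def by auto
  have TL: "TT n C \<subseteq> lawrence n C" unfolding TT_def lawrence_def by auto
  have A: "\<forall>G\<in>TT n C. \<exists>F\<in>facets (lawrence n C). G \<subseteq> F"
    using TL below_facet[OF finL] by blast
  have B: "\<forall>G\<in>facets (lawrence n C). \<exists>F\<in>TT n C. G \<subseteq> F"
    unfolding facets_def lawrence_def TT_def by auto
  show ?thesis using Kset_mono[OF _ T1 B] Kset_mono[OF _ T2 A] by auto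
qed

lemma supp_lift:
  assumes "\<forall>i. i \<notin> A_cols n \<longrightarrow> u i = 0" "\<forall>i. i \<notin> A_cols n \<longrightarrow> w i = 0"
  shows "supp (lift n u) \<subseteq> supp (lift n w) \<longleftrightarrow> supp u \<subseteq> supp w"
proof
  assume H: "supp (lift n u) \<subseteq> supp (lift n w)"
  show "supp u \<subseteq> supp w"
  proof
    fix i assume i: "i \<in> supp u"
    then have ic: "i \<in> A_cols n" using assms(1) by (auto simp: supp_def)
    have "i(n+1:=1) \<in> supp (lift n u)" using i lift_upd[OF ic, of 1 u] by (simp add: supp_def)
    then have "i(n+1:=1) \<in> supp (lift n w)" using H by blast
    then show "i \<in> supp w" using lift_upd[OF ic, of 1 w] by (simp add: supp_def)
  qed
next
  assume H: "supp u \<subseteq> supp w"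
  show "supp (lift n u) \<subseteq> supp (lift n w)"
  proof
    fix i assume i: "i \<in> supp (lift n u)"
    then have ic: "i \<in> A_cols (n+1)" by (auto simp: supp_def lift_def split: if_splits)
    then have "restrict i {1..n} \<in> supp u" using i by (auto simp: supp_def lift_def split: if_splits)
    then have "restrict i {1..n} \<in> supp w" using H by blast
    then show "i \<in> supp (lift n w)" using ic by (auto simp: supp_def lift_def)
  qed
qed

lemma lift_zero: "lift n (\<lambda>_. 0) = (\<lambda>_. 0)"
  by (auto simp: lift_def)

lemma supp_lift_empty:
  assumes "\<forall>i. i \<notin> A_cols n \<longrightarrow> u i = 0"
  shows "supp (lift n u) = {} \<longleftrightarrow> supp u = {}"
  using supp_lift[OF assms, of "\<lambda>_. 0"] lift_zero[of n] by (simp add: supp_def)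

lemma gcd_lift:
  assumes "\<forall>i. i \<notin> A_cols n \<longrightarrow> u i = 0"
  shows "Gcd (lift n u ` A_cols (n+1)) = Gcd (u ` A_cols n)"
proof -
  have D: "(\<forall>x\<in>lift n u ` A_cols (n+1). d dvd x) \<longleftrightarrow> (\<forall>x\<in>u ` A_cols n. d dvd x)" for d
  proof
    assume H: "\<forall>x\<in>lift n u ` A_cols (n+1). d dvd x"
    show "\<forall>x\<in>u ` A_cols n. d dvd x"
    proof
      fix x assume "x \<in> u ` A_cols n"
      then obtain i where i: "i \<in> A_cols n" "x = u i" by blast
      have "lift n u (i(n+1:=1)) = u i" using lift_upd[OF i(1), of 1 u] by simp
      moreover have "i(n+1:=1) \<in> A_cols (n+1)" using c1[OF i(1)] by simp
      ultimately show "d dvd x" using H i(2) by (metis image_eqI)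
    qed
  next
    assume H: "\<forall>x\<in>u ` A_cols n. d dvd x"
    show "\<forall>x\<in>lift n u ` A_cols (n+1). d dvd x"
    proof
      fix x assume "x \<in> lift n u ` A_cols (n+1)"
      then obtain i where i: "i \<in> A_cols (n+1)" "x = lift n u i" by blast
      have "d dvd u (restrict i {1..n})" using H c2[OF i(1)] by blast
      then show "d dvd x" using i by (simp add: lift_def)
    qed
  qed
  let ?A = "lift n u ` A_cols (n+1)" and ?B = "u ` A_cols n"
  have h1: "Gcd ?A dvd Gcd ?B" unfolding dvd_Gcd_iff using D[of "Gcd ?A"] by (simp add: Gcd_dvd)
  have h2: "Gcd ?B dvd Gcd ?A" unfolding dvd_Gcd_iff using D[of "Gcd ?B"] by (simp add: Gcd_dvd)
  show ?thesis
    by (rule zdvd_antisym_nonneg[OF _ _ h1 h2]) simp_all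
qed

lemma entries_lift:
  assumes "\<forall>i. i \<notin> A_cols n \<longrightarrow> u i = 0"
  shows "(\<forall>i. lift n u i \<in> {-1,0,1}) \<longleftrightarrow> (\<forall>i. u i \<in> {-1,0,1})"
proof
  assume H: "\<forall>i. lift n u i \<in> {-1,0,1}"
  show "\<forall>i. u i \<in> {-1,0,1}"
  proof
    fix i show "u i \<in> {-1,0,1}"
    proof (cases "i \<in> A_cols n")
      case True then show ?thesis using H lift_upd[OF True, of 1 u] by (metis insertI1 insert_subset subset_insertI)
    next
      case False then show ?thesis using assms by simp
    qed
  qed
next
  assume H: "\<forall>i. u i \<in> {-1,0,1}"
  show "\<forall>i. lift n u i \<in> {-1,0,1}"
    using H by (auto simp: lift_def)
qed


lemma van_K: "Kset {1..n} S u \<Longrightarrow> \<forall>i. i \<notin> A_cols n \<longrightarrow> u i = 0"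
  unfolding Kset_def A_cols_def by blast

lemma main_equiv:
  fixes n :: nat and C :: "nat set set"
  assumes sc: "simplicial_complex n C"
  shows "unimodular_complex n C \<longleftrightarrow> unimodular_complex (n + 1) (lawrence n C)"
proof -
  define P1 where "P1 u \<longleftrightarrow> in_kernel (A_rows C) (A_cols n) A_entry u" for u
  define P2 where "P2 v \<longleftrightarrow> in_kernel (A_rows (lawrence n C)) (A_cols (n+1)) A_entry v" for v
  have P1K: "P1 u \<longleftrightarrow> Kset {1..n} (facets C) u" for u unfolding P1_def by (rule kernel_iff)
  have P2K: "P2 v \<longleftrightarrow> Kset {1..n+1} (TT n C) v" for v
    unfolding P2_def kernel_iff using lawrence_K[OF sc] by simp
  have van: "P1 u \<Longrightarrow> \<forall>i. i \<notin> A_cols n \<longrightarrow> u i = 0" for u using P1K van_K by blast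
  have K1: "P1 u \<Longrightarrow> P2 (lift n u)" for u using P1K P2K lift_K[OF sc van] by blast
  have K2: "P2 v \<Longrightarrow> v = lift n (proj n v) \<and> P1 (proj n v)" for v
  proof -
    assume H: "P2 v"
    then have e: "v = lift n (proj n v)" using P2K lift_proj by blast
    then have "P1 (proj n v)" using H P2K P1K lift_K[OF sc proj_van] by metis
    then show ?thesis using e by blast
  qed
  have circ: "P1 u \<Longrightarrow> is_circuit (A_rows (lawrence n C)) (A_cols (n+1)) A_entry (lift n u) \<longleftrightarrow> is_circuit (A_rows C) (A_cols n) A_entry u" for u
  proof -
    assume u: "P1 u"
    note vu = van[OF u]
    have min: "(\<forall>v. P2 v \<and> supp v \<noteq> {} \<and> supp v \<subseteq> supp (lift n u) \<longrightarrow> supp v = supp (lift n u))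
       \<longleftrightarrow> (\<forall>w. P1 w \<and> supp w \<noteq> {} \<and> supp w \<subseteq> supp u \<longrightarrow> supp w = supp u)"
    proof
      assume H: "\<forall>v. P2 v \<and> supp v \<noteq> {} \<and> supp v \<subseteq> supp (lift n u) \<longrightarrow> supp v = supp (lift n u)"
      show "\<forall>w. P1 w \<and> supp w \<noteq> {} \<and> supp w \<subseteq> supp u \<longrightarrow> supp w = supp u"
      proof (intro allI impI)
        fix w assume w: "P1 w \<and> supp w \<noteq> {} \<and> supp w \<subseteq> supp u"
        note vw = van[OF conjunct1[OF w]]
        have "supp (lift n w) = supp (lift n u)"
          using H K1 w supp_lift[OF vw vu] supp_lift_empty[OF vw] by blast
        then show "supp w = supp u" using supp_lift[OF vw vu] supp_lift[OF vu vw] by blast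
      qed
    next
      assume H: "\<forall>w. P1 w \<and> supp w \<noteq> {} \<and> supp w \<subseteq> supp u \<longrightarrow> supp w = supp u"
      show "\<forall>v. P2 v \<and> supp v \<noteq> {} \<and> supp v \<subseteq> supp (lift n u) \<longrightarrow> supp v = supp (lift n u)"
      proof (intro allI impI)
        fix v assume v: "P2 v \<and> supp v \<noteq> {} \<and> supp v \<subseteq> supp (lift n u)"
        define w where "w = proj n v"
        have ev: "v = lift n w" and pw: "P1 w" using K2 v unfolding w_def by blast+
        note vw = van[OF pw]
        have "supp w = supp u"
          using H pw v ev supp_lift[OF vw vu] supp_lift_empty[OF vw] by metis
        then show "supp v = supp (lift n u)" using ev supp_lift[OF vw vu] supp_lift[OF vu vw] by blast
      qed
    qed
    show ?thesis
      unfolding is_circuit_def P1_def[symmetric] P2_def[symmetric]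
      using K1[OF u] u min supp_lift_empty[OF vu] gcd_lift[OF vu] by auto
  qed
  show ?thesis
    unfolding unimodular_complex_def unimodular_matrix_def
  proof
    assume H: "\<forall>u. is_circuit (A_rows C) (A_cols n) A_entry u \<longrightarrow> (\<forall>i. u i \<in> {- 1, 0, 1})"
    show "\<forall>v. is_circuit (A_rows (lawrence n C)) (A_cols (n+1)) A_entry v \<longrightarrow> (\<forall>i. v i \<in> {- 1, 0, 1})"
    proof (rule allI, rule impI)
      fix v assume c: "is_circuit (A_rows (lawrence n C)) (A_cols (n+1)) A_entry v"
      then have "P2 v" unfolding is_circuit_def P2_def by blast
      then have ev: "v = lift n (proj n v)" and pw: "P1 (proj n v)" using K2 by blast+
      have "is_circuit (A_rows C) (A_cols n) A_entry (proj n v)" using circ[OF pw] c ev by simp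
      then have "\<forall>i. proj n v i \<in> {-1,0,1}" using H by blast
      then have "\<forall>i. lift n (proj n v) i \<in> {-1,0,1}" using entries_lift[OF van[OF pw]] by blast
      then show "\<forall>i. v i \<in> {-1,0,1}" using ev by metis
    qed
  next
    assume H: "\<forall>v. is_circuit (A_rows (lawrence n C)) (A_cols (n+1)) A_entry v \<longrightarrow> (\<forall>i. v i \<in> {- 1, 0, 1})"
    show "\<forall>u. is_circuit (A_rows C) (A_cols n) A_entry u \<longrightarrow> (\<forall>i. u i \<in> {- 1, 0, 1})"
    proof (rule allI, rule impI)
      fix u assume c: "is_circuit (A_rows C) (A_cols n) A_entry u"
      then have pu: "P1 u" unfolding is_circuit_def P1_def by blast
      then have "is_circuit (A_rows (lawrence n C)) (A_cols (n+1)) A_entry (lift n u)" using circ c by blast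
      then have "\<forall>i. lift n u i \<in> {-1,0,1}" using H by blast
      then show "\<forall>i. u i \<in> {-1,0,1}" using entries_lift[OF van[OF pu]] by blast
    qed
  qed
qed


theorem proposition3p15:
  fixes n :: nat and C :: "nat set set"
  assumes "simplicial_complex n C"
  shows "unimodular_complex n C \<longleftrightarrow> unimodular_complex (n + 1) (lawrence n C)"
  using main_equiv[OF assms] .

end
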